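(* Let $(P,\theta)$ be an X-program with $P$ an $n\times l$ binary matrix, let $\mathbf{X}$ be its output random variable, and let $m$ be a projector on $\mathbb{F}_2^l$ with range $R$, such that the range of the dual map $m^*$ is $R^*$. Then for every $\mathbf{x}\in R$, \[ \mathbb{P}[m(\mathbf{X})=\mathbf{x}]=\mathbb{E}_{\mathbf{s}\in R^*}\big[(-1)^{\mathbf{x}\cdot\mathbf{s}}\cdot\alpha_{(P_{\mathbf{s}},2\theta)}\big], \] where $\mathbb{E}_{\mathbf{s}\in R^*}$ denotes the average over $\mathbf{s}$ uniform in $R^*$.
   Context: An X-program $(P,\theta)$: $P$ is an $n\times l$ matrix over $\mathbb{F}_2$, $\theta\in\mathbb{R}$, $\mathbf{H}_P=\sum_{a=1}^n\prod_{b=1}^lX_b^{P_{ab}}$ on $l$ qubits ($X_b$ Pauli $X$ on qubit $b$), and $\mathbf{X}$ is the random variable on $\mathbb{F}_2^l$ with $\mathbb{P}[\mathbf{X}=\mathbf{x}]=|\langle\mathbf{x}|\exp(i\theta\mathbf{H}_P)|\mathbf{0}\rangle|^2$. A projector is a linear map $m:\mathbb{F}_2^l\to\mathbb{F}_2^l$ with $m^2=m$ (not necessarily orthogonal); $K$ and $R$ are its kernel and range, and $m^*$ is its dual (transpose) with respect to the standard inner product $\mathbf{x}\cdot\mathbf{y}$. The marginal distribution is $\mathbb{P}[m(\mathbf{X})=\mathbf{x}]=[\mathbf{x}\in R]\sum_{\mathbf{k}\in K}\mathbb{P}[\mathbf{X}=\mathbf{x}+\mathbf{k}]$. For $\mathbf{s}\in\mathbb{F}_2^l$,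 $P_{\mathbf{s}}$ is the matrix obtained from $P$ by deleting all rows $\mathbf{a}$ with $\mathbf{a}\cdot\mathbf{s}=0$. For a binary matrix $M$ with $n'$ rows and rank $r$, $\mathcal{C}(M)\subseteq\mathbb{F}_2^{n'}$ is the span of its columns, $W_{\mathcal{C}}(\zeta)=\sum_{\mathbf{c}\in\mathcal{C}}\zeta^{|\mathbf{c}|}$ with $|\mathbf{c}|$ the Hamming weight, and $\alpha_{(M,\phi)}=2^{-r}e^{i\phi n'}W_{\mathcal{C}(M)}(e^{-2i\phi})$. *)

theory Defs
  imports Complex_Main
begin

text \<open>Vectors of F_2^l are boolean lists of length l; qubit / coordinate b is list position b.\<close>

definition vecs :: "nat \<Rightarrow> bool list set" where
  "vecs l = {xs. length xs = l}"

definition vxor :: "bool list \<Rightarrow> bool list \<Rightarrow> bool list" where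
  "vxor x y = map2 (\<noteq>) x y"

definition dot :: "bool list \<Rightarrow> bool list \<Rightarrow> bool" where
  "dot x y = odd (card {i. i < length x \<and> x ! i \<and> y ! i})"

definition hweight :: "bool list \<Rightarrow> nat" where
  "hweight c = length (filter id c)"

text \<open>Operators on l qubits as matrices indexed by computational basis states.\<close>
type_synonym cmat = "bool list \<Rightarrow> bool list \<Rightarrow> complex"

definition ident :: cmat where
  "ident x y = (if x = y then 1 else 0)"

definition mat_mult :: "nat \<Rightarrow> cmat \<Rightarrow> cmat \<Rightarrow> cmat" where
  "mat_mult l A B x y = (\<Sum>z\<in>vecs l. A x z * B z y)"

fun mat_pow :: "nat \<Rightarrow> cmat \<Rightarrow> nat \<Rightarrow> cmat" where
  "mat_pow l A 0 = ident"
| "mat_pow l A (Suc k) = mat_mult l A (mat_pow l A k)"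

definition mat_exp :: "nat \<Rightarrow> cmat \<Rightarrow> cmat" where
  "mat_exp l A x y = (\<Sum>k. mat_pow l A k x y / of_nat (fact k))"

definition pauliX :: "nat \<Rightarrow> cmat" where
  "pauliX b x y = (if x = y[b := \<not> y ! b] then 1 else 0)"

definition pauli_string :: "nat \<Rightarrow> bool list \<Rightarrow> cmat" where
  "pauli_string l p = foldr (\<lambda>b A. mat_mult l (if p ! b then pauliX b else ident) A) [0..<l] ident"

definition hamiltonian :: "nat \<Rightarrow> bool list list \<Rightarrow> cmat" where
  "hamiltonian l P x y = (\<Sum>a<length P. pauli_string l (P ! a) x y)"

text \<open>P[X = x] = |<x| exp(i theta H_P) |0>|^2.\<close>
definition xprog_prob :: "nat \<Rightarrow> bool list list \<Rightarrow> real \<Rightarrow> bool list \<Rightarrow> real" where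
  "xprog_prob l P \<theta> x =
     (cmod (mat_exp l (\<lambda>u v. \<i> * complex_of_real \<theta> * hamiltonian l P u v) x (replicate l False)))\<^sup>2"

definition marginal_prob :: "nat \<Rightarrow> bool list list \<Rightarrow> real \<Rightarrow> (bool list \<Rightarrow> bool list) \<Rightarrow> bool list \<Rightarrow> real" where
  "marginal_prob l P \<theta> m x = (\<Sum>y\<in>{y\<in>vecs l. m y = x}. xprog_prob l P \<theta> y)"

definition is_linear_map :: "nat \<Rightarrow> (bool list \<Rightarrow> bool list) \<Rightarrow> bool" where
  "is_linear_map l m \<longleftrightarrow> (\<forall>x\<in>vecs l. m x \<in> vecs l) \<and>
     (\<forall>x\<in>vecs l. \<forall>y\<in>vecs l. m (vxor x y) = vxor (m x) (m y))"

definition is_projector :: "nat \<Rightarrow> (bool list \<Rightarrow> bool list) \<Rightarrow> bool" where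
  "is_projector l m \<longleftrightarrow> is_linear_map l m \<and> (\<forall>x\<in>vecs l. m (m x) = m x)"

definition dual_map :: "nat \<Rightarrow> (bool list \<Rightarrow> bool list) \<Rightarrow> bool list \<Rightarrow> bool list" where
  "dual_map l m z = (THE y. y \<in> vecs l \<and> (\<forall>x\<in>vecs l. dot y x = dot z (m x)))"

definition restrict_rows :: "bool list list \<Rightarrow> bool list \<Rightarrow> bool list list" where
  "restrict_rows P s = filter (\<lambda>a. dot a s) P"

text \<open>Column space of a matrix (given as list of rows, with l columns).\<close>
definition colspace :: "nat \<Rightarrow> bool list list \<Rightarrow> bool list set" where
  "colspace l M = (\<lambda>y. map (\<lambda>r. dot r y) M) ` vecs l"

definition f2_span :: "nat \<Rightarrow> bool list set \<Rightarrow> bool list set" where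
  "f2_span k S = {v. \<exists>T. finite T \<and> T \<subseteq> S \<and> v = Finite_Set.fold vxor (replicate k False) T}"

definition f2_rank :: "nat \<Rightarrow> bool list list \<Rightarrow> nat" where
  "f2_rank l M = Min {card S | S. finite S \<and> S \<subseteq> colspace l M \<and>
                                  f2_span (length M) S = colspace l M}"

definition weight_enum :: "bool list set \<Rightarrow> complex \<Rightarrow> complex" where
  "weight_enum C \<zeta> = (\<Sum>c\<in>C. \<zeta> ^ hweight c)"

definition alpha :: "nat \<Rightarrow> bool list list \<Rightarrow> real \<Rightarrow> complex" where
  "alpha l M \<phi> = complex_of_real (2 powr (- real (f2_rank l M)))
      * exp (\<i> * complex_of_real (\<phi> * real (length M)))
      * weight_enum (colspace l M) (exp (- 2 * \<i> * complex_of_real \<phi>))"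

end

theory Submission
  imports Defs
begin



lemma dot_Nil[simp]: "dot [] y = False"
  by (simp add: dot_def)

lemma card_Suc_split: "card {i. i < Suc n \<and> P i} = (if P 0 then 1 else 0) + card {i. i < n \<and> P (Suc i)}"
proof -
  have e: "{i. i < Suc n \<and> P i} = (if P 0 then {0} else {}) \<union> Suc ` {i. i < n \<and> P (Suc i)}"
    by (auto simp: less_Suc_eq_0_disj)
  show ?thesis unfolding e by (auto simp: card_image)
qed

lemma dot_Cons[simp]: "dot (a#u) (b#w) = ((a \<and> b) \<noteq> dot u w)"
  unfolding dot_def by (simp only: length_Cons card_Suc_split) auto

lemma vxor_Cons[simp]: "vxor (a#u) (b#w) = (a \<noteq> b) # vxor u w"
  by (simp add: vxor_def)
lemma vxor_Nil[simp]: "vxor [] w = []" "vxor u [] = []"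
  by (auto simp: vxor_def)
lemma length_vxor[simp]: "length (vxor u w) = min (length u) (length w)"
  by (simp add: vxor_def)

lemma vecs_Suc: "vecs (Suc k) = (\<lambda>(b,v). b#v) ` (UNIV \<times> vecs k)"
  by (auto simp: vecs_def length_Suc_conv)

lemma finite_vecs[simp]: "finite (vecs k)"
  by (induct k) (auto simp: vecs_Suc vecs_def[of 0])

lemma card_vecs: "card (vecs k) = 2^k"
  using card_lists_length_eq[of "UNIV::bool set" k] by (simp add: vecs_def)

lemma sum_vecs_Suc: "(\<Sum>v\<in>vecs (Suc k). f v) = (\<Sum>v\<in>vecs k. f (True#v) + f (False#v))"
proof -
  have "(\<Sum>v\<in>vecs (Suc k). f v) = (\<Sum>(b,v)\<in>UNIV \<times> vecs k. f (b # v))"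
    unfolding vecs_Suc by (subst sum.reindex) (auto simp: inj_on_def intro!: sum.cong)
  also have "\<dots> = (\<Sum>b\<in>UNIV. \<Sum>v\<in>vecs k. f (b#v))"
    by (simp add: sum.cartesian_product)
  also have "\<dots> = (\<Sum>v\<in>vecs k. f (True#v) + f (False#v))"
    by (simp add: UNIV_bool sum.distrib add.commute)
  finally show ?thesis .
qed

definition chi :: "bool list \<Rightarrow> bool list \<Rightarrow> complex" where
  "chi u w = (if dot u w then -1 else 1)"

lemma chi_Cons[simp]: "chi (a#u) (b#w) = (if a \<and> b then - chi u w else chi u w)"
  by (auto simp: chi_def)

lemma sum_chi: "u \<in> vecs k \<Longrightarrow> (\<Sum>w\<in>vecs k. chi u w) = (if u = replicate k False then 2^k else 0)"
proof (induct k arbitrary: u)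
  case 0 then show ?case by (simp add: vecs_def chi_def)
next
  case (Suc k)
  then obtain a u' where u: "u = a#u'" "u' \<in> vecs k" by (auto simp: vecs_def length_Suc_conv)
  show ?case using Suc(1)[OF u(2)] by (cases a) (auto simp: u sum_vecs_Suc sum.distrib sum_negf mult_2[symmetric] sum_distrib_left[symmetric])
qed

lemma dot_vxor1: "length u = length v \<Longrightarrow> length v = length w \<Longrightarrow> dot (vxor u v) w = (dot u w \<noteq> dot v w)"
proof (induct u arbitrary: v w)
  case Nil then show ?case by simp
next
  case (Cons a u)
  then obtain b v' c w' where vw: "v = b#v'" "w = c#w'" "length v' = length u" "length w' = length u"
    by (metis length_Suc_conv)
  have "dot (vxor u v') w' = (dot u w' \<noteq> dot v' w')" using Cons.hyps vw by simp
  then show ?case unfolding vw by (cases a; cases b; cases c) simp_all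
qed

lemma dot_sym: "length u = length w \<Longrightarrow> dot u w = dot w u"
proof (induct u arbitrary: w)
  case Nil then show ?case by simp
next
  case (Cons a u)
  then obtain c w' where w: "w = c#w'" "length w' = length u" by (metis length_Suc_conv)
  have "dot u w' = dot w' u" using Cons.hyps w by simp
  then show ?case unfolding w by (cases a; cases c) simp_all
qed

lemma dot_vxor2: "length u = length v \<Longrightarrow> length v = length w \<Longrightarrow> dot u (vxor v w) = (dot u v \<noteq> dot u w)"
proof -
  assume a: "length u = length v" "length v = length w"
  have 1: "dot u (vxor v w) = dot (vxor v w) u" using a by (intro dot_sym) simp
  have 2: "dot (vxor v w) u = (dot v u \<noteq> dot w u)" using a by (intro dot_vxor1) simp_all
  have 3: "dot u v = dot v u" "dot u w = dot w u" using a by (simp_all add: dot_sym)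
  show ?thesis by (simp only: 1 2 3)
qed

lemma dot_zero1[simp]: "dot (replicate k False) w = False"
proof -
  have "{i. i < length (replicate k False) \<and> replicate k False ! i \<and> w ! i} = {}" by auto
  then show ?thesis by (simp only: dot_def) simp
qed

lemma dot_zero2[simp]: "length u \<le> k \<Longrightarrow> dot u (replicate k False) = False"
proof -
  assume "length u \<le> k"
  then have "{i. i < length u \<and> u ! i \<and> replicate k False ! i} = {}" by auto
  then show ?thesis by (simp only: dot_def) simp
qed

lemma vxor_comm: "vxor u v = vxor v u"
  unfolding vxor_def by (rule nth_equalityI) (simp_all, blast)

lemma vxor_assoc: "vxor (vxor u v) w = vxor u (vxor v w)"
  unfolding vxor_def by (rule nth_equalityI) (simp_all, blast)

lemma vxor_self: "vxor u u = replicate (length u) False"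
  unfolding vxor_def by (rule nth_equalityI) simp_all

lemma vxor_zero: "length u \<le> k \<Longrightarrow> vxor u (replicate k False) = u"
  unfolding vxor_def by (rule nth_equalityI) simp_all

lemma vxor_zero': "length u \<le> k \<Longrightarrow> vxor (replicate k False) u = u"
  by (simp add: vxor_comm vxor_zero)

lemma vxor_cancel: "length u = length v \<Longrightarrow> vxor u (vxor u v) = v"
  by (simp add: vxor_assoc[symmetric] vxor_self vxor_zero')

lemma vxor_vecs[simp]: "u \<in> vecs l \<Longrightarrow> v \<in> vecs l \<Longrightarrow> vxor u v \<in> vecs l"
  by (simp add: vecs_def)

lemma zero_vecs[simp]: "replicate l False \<in> vecs l"
  by (simp add: vecs_def)

lemma vxor_eq_zero: "length u = length v \<Longrightarrow> (vxor u v = replicate (length u) False) = (u = v)"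
proof
  assume a: "length u = length v" "vxor u v = replicate (length u) False"
  have "v = vxor u (vxor u v)" by (rule vxor_cancel[OF a(1), symmetric])
  also have "\<dots> = u" using a by (simp add: vxor_zero)
  finally show "u = v" by simp
qed (simp add: vxor_self)

lemma chi_vxor1: "length u = length v \<Longrightarrow> length v = length w \<Longrightarrow> chi (vxor u v) w = chi u w * chi v w"
  by (auto simp: chi_def dot_vxor1)

lemma chi_vxor2: "length u = length v \<Longrightarrow> length v = length w \<Longrightarrow> chi u (vxor v w) = chi u v * chi u w"
  by (auto simp: chi_def dot_vxor2)

lemma chi_sym: "length u = length w \<Longrightarrow> chi u w = chi w u"
  by (simp add: chi_def dot_sym)

lemma chi_sq: "chi u w * chi u w = 1"
  by (simp add: chi_def)

lemma sum_chi_subgroup: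
  assumes K: "K \<subseteq> vecs l" "\<And>a b. a \<in> K \<Longrightarrow> b \<in> K \<Longrightarrow> vxor a b \<in> K" and u: "u \<in> vecs l"
  shows "(\<Sum>k\<in>K. chi k u) = (if \<forall>k\<in>K. \<not> dot k u then of_nat (card K) else 0)"
proof (cases "\<forall>k\<in>K. \<not> dot k u")
  case True then show ?thesis by (simp add: chi_def)
next
  case False
  then obtain k0 where k0: "k0 \<in> K" "dot k0 u" by blast
  have len: "\<And>a. a \<in> K \<Longrightarrow> length a = l" using K(1) by (auto simp: vecs_def)
  have "(\<Sum>k\<in>K. chi k u) = (\<Sum>k\<in>K. chi (vxor k0 k) u)"
  proof (rule sum.reindex_bij_witness[of _ "vxor k0" "vxor k0"])
    fix a assume a: "a \<in> K"
    show "vxor k0 (vxor k0 a) = a" using len[OF a] len[OF k0(1)] by (intro vxor_cancel) simp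
    show "vxor k0 a \<in> K" using K(2)[OF k0(1) a] .
    show "vxor k0 (vxor k0 a) = a" using len[OF a] len[OF k0(1)] by (intro vxor_cancel) simp
    show "vxor k0 a \<in> K" using K(2)[OF k0(1) a] .
  qed (metis len k0(1) vxor_cancel)
  also have "\<dots> = (\<Sum>k\<in>K. - chi k u)"
  proof (rule sum.cong)
    fix k assume k: "k \<in> K"
    have "length u = l" using u by (simp add: vecs_def)
    then have "chi (vxor k0 k) u = chi k0 u * chi k u"
      using len[OF k] len[OF k0(1)] by (intro chi_vxor1) simp_all
    then show "chi (vxor k0 k) u = - chi k u" using k0(2) by (simp add: chi_def)
  qed simp
  finally have "(\<Sum>k\<in>K. chi k u) = - (\<Sum>k\<in>K. chi k u)" by (simp add: sum_negf)
  then have "(\<Sum>k\<in>K. chi k u) = 0" by simp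
  then show ?thesis using False by (simp only: if_False)
qed




definition unitv :: "nat \<Rightarrow> nat \<Rightarrow> bool list" where
  "unitv l j = (replicate l False)[j := True]"

lemma unitv_vecs[simp]: "unitv l j \<in> vecs l"
  by (simp add: unitv_def vecs_def)

lemma dot_unitv: "length y = l \<Longrightarrow> j < l \<Longrightarrow> dot y (unitv l j) = y ! j"
proof -
  assume a: "length y = l" "j < l"
  have "{i. i < length y \<and> y ! i \<and> unitv l j ! i} = (if y!j then {j} else {})"
    using a by (auto simp: unitv_def nth_list_update)
  then show ?thesis by (simp add: dot_def)
qed

lemma vecs_eqI: "y \<in> vecs l \<Longrightarrow> y' \<in> vecs l \<Longrightarrow> (\<And>x. x \<in> vecs l \<Longrightarrow> dot y x = dot y' x) \<Longrightarrow> y = y'"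
proof -
  assume a: "y \<in> vecs l" "y' \<in> vecs l" "\<And>x. x \<in> vecs l \<Longrightarrow> dot y x = dot y' x"
  show "y = y'"
  proof (rule nth_equalityI)
    show "length y = length y'" using a by (simp add: vecs_def)
    fix i assume i: "i < length y"
    have "y ! i = dot y (unitv l i)" using a i by (simp add: dot_unitv vecs_def)
    also have "\<dots> = dot y' (unitv l i)" using a by simp
    also have "\<dots> = y' ! i" using a i by (simp add: dot_unitv vecs_def)
    finally show "y ! i = y' ! i" .
  qed
qed

locale proj =
  fixes l :: nat and m :: "bool list \<Rightarrow> bool list"
  assumes pr: "is_projector l m"
begin

lemma m_vecs[simp]: "x \<in> vecs l \<Longrightarrow> m x \<in> vecs l"
  using pr by (simp add: is_projector_def is_linear_map_def)

lemma m_lin: "x \<in> vecs l \<Longrightarrow> y \<in> vecs l \<Longrightarrow> m (vxor x y) = vxor (m x) (m y)"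
  using pr by (simp add: is_projector_def is_linear_map_def)

lemma m_idem: "x \<in> vecs l \<Longrightarrow> m (m x) = m x"
  using pr by (simp add: is_projector_def)

lemma m_zero: "m (replicate l False) = replicate l False"
proof -
  have "m (replicate l False) = m (vxor (replicate l False) (replicate l False))"
    by (simp add: vxor_self)
  also have "\<dots> = vxor (m (replicate l False)) (m (replicate l False))" by (simp add: m_lin)
  also have "\<dots> = replicate l False" using m_vecs[OF zero_vecs[of l]] by (simp add: vxor_self vecs_def)
  finally show ?thesis .
qed

definition dv :: "bool list \<Rightarrow> bool list" where
  "dv z = map (\<lambda>j. dot z (m (unitv l j))) [0..<l]"

lemma dv_vecs: "dv z \<in> vecs l" by (simp add: dv_def vecs_def)

lemma dv_prop_aux:
  assumes z: "z \<in> vecs l"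
  shows "n \<le> l \<Longrightarrow> x \<in> vecs l \<Longrightarrow> (\<forall>i. n \<le> i \<and> i < l \<longrightarrow> \<not> x ! i) \<Longrightarrow> dot (dv z) x = dot z (m x)"
proof (induct n arbitrary: x)
  case 0
  then have "x = replicate l False" by (intro nth_equalityI) (auto simp: vecs_def)
  then show ?case using m_zero z by (simp add: vecs_def dv_def)
next
  case (Suc n)
  show ?case
  proof (cases "x ! n")
    case False
    have "\<forall>i. n \<le> i \<and> i < l \<longrightarrow> \<not> x ! i"
    proof (intro allI impI)
      fix i assume i: "n \<le> i \<and> i < l"
      show "\<not> x ! i"
      proof (cases "i = n")
        case True then show ?thesis using False by simp
      next
        case False then have "Suc n \<le> i" using i by simp
        then show ?thesis using Suc.prems(3) i by blast
      qed
    qed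
    then show ?thesis using Suc.prems by (intro Suc.hyps) simp_all
  next
    case True
    define x' where "x' = x[n := False]"
    have lx: "length x = l" using Suc by (simp add: vecs_def)
    have x'v: "x' \<in> vecs l" using Suc by (simp add: x'_def vecs_def)
    have ih: "dot (dv z) x' = dot z (m x')"
    proof (rule Suc.hyps[OF _ x'v])
      show "n \<le> l" using Suc.prems by simp
      show "\<forall>i. n \<le> i \<and> i < l \<longrightarrow> \<not> x' ! i"
      proof (intro allI impI)
        fix i assume i: "n \<le> i \<and> i < l"
        show "\<not> x' ! i"
        proof (cases "i = n")
          case True then show ?thesis using i lx by (simp add: x'_def)
        next
          case False then have "Suc n \<le> i" using i by simp
          then show ?thesis using Suc.prems(3) i False by (simp add: x'_def)
        qed
      qed
    qed
    have xe: "x = vxor x' (unitv l n)"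
    proof (rule nth_equalityI)
      show "length x = length (vxor x' (unitv l n))" using lx by (simp add: x'_def unitv_def)
      fix i assume "i < length x"
      then show "x ! i = vxor x' (unitv l n) ! i" using lx True
        by (cases "i = n") (simp_all add: x'_def unitv_def vxor_def nth_list_update)
    qed
    have lz: "length z = l" using z by (simp add: vecs_def)
    have "dot z (m x) = dot z (vxor (m x') (m (unitv l n)))" using xe x'v by (simp add: m_lin)
    also have "\<dots> = (dot z (m x') \<noteq> dot z (m (unitv l n)))"
    proof -
      have "m x' \<in> vecs l" "m (unitv l n) \<in> vecs l" using x'v by simp_all
      then show ?thesis using lz by (intro dot_vxor2) (simp_all add: vecs_def)
    qed
    also have "dot z (m (unitv l n)) = dot (dv z) (unitv l n)"
      using Suc by (simp add: dot_unitv dv_def)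
    also have "(dot z (m x') \<noteq> dot (dv z) (unitv l n)) = dot (dv z) x"
      unfolding xe ih[symmetric] using x'v
      by (subst dot_vxor2) (auto simp: dv_def vecs_def unitv_def)
    finally show ?thesis by simp
  qed
qed

lemma dv_prop: "z \<in> vecs l \<Longrightarrow> x \<in> vecs l \<Longrightarrow> dot (dv z) x = dot z (m x)"
  by (rule dv_prop_aux[where n=l]) auto

lemma dual_eq: "z \<in> vecs l \<Longrightarrow> dual_map l m z = dv z"
  unfolding dual_map_def
proof (rule the_equality)
  assume z: "z \<in> vecs l"
  show "dv z \<in> vecs l \<and> (\<forall>x\<in>vecs l. dot (dv z) x = dot z (m x))" using z dv_vecs dv_prop by simp
  fix y assume y: "y \<in> vecs l \<and> (\<forall>x\<in>vecs l. dot y x = dot z (m x))"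
  show "y = dv z"
  proof (rule vecs_eqI[of _ l])
    fix x assume "x \<in> vecs l" then show "dot y x = dot (dv z) x" using y z dv_prop by simp
  qed (use y dv_vecs in auto)
qed

definition Ker where "Ker = {y\<in>vecs l. m y = replicate l False}"

lemma Ker_sub: "Ker \<subseteq> vecs l" unfolding Ker_def by blast
lemma zero_Ker: "replicate l False \<in> Ker" by (simp add: Ker_def m_zero)
lemma finite_Ker: "finite Ker" using Ker_sub finite_subset finite_vecs by blast
lemma Ker_vxor: "a \<in> Ker \<Longrightarrow> b \<in> Ker \<Longrightarrow> vxor a b \<in> Ker"
proof -
  assume "a \<in> Ker" "b \<in> Ker"
  then have v: "a \<in> vecs l" "b \<in> vecs l" and z: "m a = replicate l False" "m b = replicate l False" by (auto simp: Ker_def)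
  have "m (vxor a b) = vxor (m a) (m b)" using v by (rule m_lin)
  also have "\<dots> = replicate l False" unfolding z by (simp add: vxor_self)
  finally show ?thesis using v by (simp add: Ker_def)
qed
lemma S_char: "dual_map l m ` vecs l = {u \<in> vecs l. \<forall>k\<in>Ker. \<not> dot k u}"
proof safe
  fix z assume z: "z \<in> vecs l"
  show "dual_map l m z \<in> vecs l" using z by (simp add: dual_eq dv_vecs)
  fix k assume k: "k \<in> Ker" "dot k (dual_map l m z)"
  have "dot k (dv z) = dot (dv z) k" using k(1) by (intro dot_sym) (simp add: Ker_def vecs_def dv_def)
  also have "\<dots> = dot z (m k)" using k z by (simp add: dv_prop Ker_def)
  also have "\<dots> = False" using k z by (simp add: Ker_def vecs_def)
  finally show False using k z by (simp add: dual_eq)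
next
  fix u assume u: "u \<in> vecs l" "\<forall>k\<in>Ker. \<not> dot k u"
  have "\<forall>x\<in>vecs l. dot u x = dot u (m x)"
  proof
    fix x assume x: "x \<in> vecs l"
    define k where "k = vxor x (m x)"
    have mx: "m x \<in> vecs l" using x by simp
    have "m k = vxor (m x) (m (m x))" using x mx by (simp add: k_def m_lin)
    also have "\<dots> = replicate l False" using x mx by (simp add: m_idem vxor_self vecs_def)
    finally have kK: "k \<in> Ker" using x mx by (simp add: k_def Ker_def)
    have lk: "length k = l" "length u = l" "length (m x) = l" using kK u mx by (auto simp: Ker_def vecs_def)
    have "x = vxor (m x) k" using x m_vecs[OF x]
      by (simp add: k_def vxor_comm[of x] vxor_cancel vecs_def)
    then have "dot u x = dot u (vxor (m x) k)" by (rule arg_cong[where f="dot u"])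
    also have "\<dots> = (dot u (m x) \<noteq> dot u k)"
      using lk by (simp add: dot_vxor2)
    also have "dot u k = dot k u" using lk by (simp add: dot_sym)
    also have "dot k u = False" using u kK by blast
    finally show "dot u x = dot u (m x)" by simp
  qed
  then have "dual_map l m u = u" using u dv_prop dv_vecs
    by (subst dual_eq[OF u(1)]) (rule vecs_eqI[of _ l], auto)
  then show "u \<in> dual_map l m ` vecs l" using u by (metis image_eqI)
qed

end



context proj begin

definition Sd where "Sd = dual_map l m ` vecs l"

lemma Sd_eq: "Sd = {u \<in> vecs l. \<forall>k\<in>Ker. \<not> dot k u}" using S_char by (simp add: Sd_def)
lemma Sd_sub: "Sd \<subseteq> vecs l" using Sd_eq by blast

lemma finite_Sd: "finite Sd" using Sd_sub finite_subset finite_vecs by blast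

lemma fiber_eq:
  assumes x: "x \<in> m ` vecs l"
  shows "{y\<in>vecs l. m y = x} = (vxor x) ` Ker"
proof -
  obtain x0 where x0: "x0 \<in> vecs l" "x = m x0" using x by blast
  have xv: "x \<in> vecs l" and mx: "m x = x" using x0 by (simp_all add: m_idem)
  show ?thesis
  proof (intro equalityI subsetI)
    fix y assume "y \<in> {y\<in>vecs l. m y = x}"
    then have y: "y \<in> vecs l" "m y = x" by auto
    define k where "k = vxor x y"
    have "m k = vxor (m x) (m y)" using xv y by (simp add: k_def m_lin)
    also have "\<dots> = replicate l False" using y mx xv by (simp add: vxor_self vecs_def)
    finally have kK: "k \<in> Ker" using xv y by (simp add: Ker_def k_def)
    have "y = vxor x k" using xv y by (simp add: k_def vxor_cancel vecs_def)
    then show "y \<in> vxor x ` Ker" using kK by blast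
  next
    fix y assume "y \<in> vxor x ` Ker"
    then obtain k where k: "k \<in> Ker" "y = vxor x k" by blast
    then have kv: "k \<in> vecs l" "m k = replicate l False" by (auto simp: Ker_def)
    have "m (vxor x k) = vxor (m x) (m k)" using xv kv by (simp add: m_lin)
    also have "\<dots> = x" using mx kv xv by (simp add: vxor_zero vecs_def)
    finally show "y \<in> {y\<in>vecs l. m y = x}" using xv kv k by simp
  qed
qed

lemma fiber_sum:
  assumes x: "x \<in> m ` vecs l" and u: "u \<in> vecs l"
  shows "(\<Sum>y\<in>{y\<in>vecs l. m y = x}. chi y u) = chi x u * (if u \<in> Sd then of_nat (card Ker) else 0)"
proof -
  have xv: "x \<in> vecs l" using x by auto
  have inj: "inj_on (vxor x) Ker"
  proof (rule inj_onI)
    fix a b assume ab: "a \<in> Ker" "b \<in> Ker" "vxor x a = vxor x b"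
    have "length a = length x" "length b = length x" using ab(1,2) Ker_sub xv by (auto simp: vecs_def)
    then have "a = vxor x (vxor x a)" "b = vxor x (vxor x b)" by (simp_all add: vxor_cancel)
    then show "a = b" using ab(3) by simp
  qed
  have "(\<Sum>y\<in>{y\<in>vecs l. m y = x}. chi y u) = (\<Sum>k\<in>Ker. chi (vxor x k) u)"
    unfolding fiber_eq[OF x] using inj by (simp add: sum.reindex)
  also have "\<dots> = (\<Sum>k\<in>Ker. chi x u * chi k u)"
  proof (rule sum.cong)
    fix k assume "k \<in> Ker"
    then have "k \<in> vecs l" using Ker_sub by blast
    then show "chi (vxor x k) u = chi x u * chi k u" using xv u by (intro chi_vxor1) (simp_all add: vecs_def)
  qed simp
  also have "\<dots> = chi x u * (\<Sum>k\<in>Ker. chi k u)" by (simp add: sum_distrib_left)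
  also have "(\<Sum>k\<in>Ker. chi k u) = (if \<forall>k\<in>Ker. \<not> dot k u then of_nat (card Ker) else 0)"
    using Ker_sub Ker_vxor u by (rule sum_chi_subgroup)
  also have "(\<forall>k\<in>Ker. \<not> dot k u) = (u \<in> Sd)" using u unfolding Sd_eq by blast
  finally show ?thesis .
qed

lemma card_KS: "(of_nat (card Ker) :: complex) * of_nat (card Sd) = 2 ^ l"
proof -
  have "(\<Sum>u\<in>vecs l. \<Sum>k\<in>Ker. chi k u) = (\<Sum>u\<in>vecs l. if u \<in> Sd then of_nat (card Ker) else 0)"
  proof (rule sum.cong)
    fix u assume u: "u \<in> vecs l"
    have "(\<Sum>k\<in>Ker. chi k u) = (if \<forall>k\<in>Ker. \<not> dot k u then of_nat (card Ker) else 0)"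
      using Ker_sub Ker_vxor u by (rule sum_chi_subgroup)
    also have "(\<forall>k\<in>Ker. \<not> dot k u) = (u \<in> Sd)" using u unfolding Sd_eq by blast
    finally show "(\<Sum>k\<in>Ker. chi k u) = (if u \<in> Sd then of_nat (card Ker) else 0)" .
  qed simp
  also have "\<dots> = (\<Sum>u\<in>Sd. of_nat (card Ker))"
    using Sd_sub by (simp add: sum.If_cases Int_absorb1 Int_commute)
  also have "\<dots> = of_nat (card Ker) * of_nat (card Sd)" by simp
  finally have 1: "(\<Sum>u\<in>vecs l. \<Sum>k\<in>Ker. chi k u) = of_nat (card Ker) * of_nat (card Sd)" .
  have "(\<Sum>u\<in>vecs l. \<Sum>k\<in>Ker. chi k u) = (\<Sum>k\<in>Ker. \<Sum>u\<in>vecs l. chi k u)" by (rule sum.swap)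
  also have "\<dots> = (\<Sum>k\<in>Ker. if k = replicate l False then 2^l else 0)"
  proof (rule sum.cong)
    fix k assume "k \<in> Ker"
    then have "k \<in> vecs l" using Ker_sub by blast
    then show "(\<Sum>u\<in>vecs l. chi k u) = (if k = replicate l False then 2^l else 0)" by (rule sum_chi)
  qed simp
  also have "\<dots> = 2^l" using zero_Ker finite_Ker by (simp add: sum.delta)
  finally show ?thesis using 1 by simp
qed

end



lemma vxor_cfc: "comp_fun_commute vxor"
proof
  fix y x
  show "vxor y \<circ> vxor x = vxor x \<circ> vxor y"
  proof
    fix z
    have "vxor y (vxor x z) = vxor (vxor y x) z" by (rule vxor_assoc[symmetric])
    also have "\<dots> = vxor (vxor x y) z" by (simp only: vxor_comm[of y x])
    also have "\<dots> = vxor x (vxor y z)" by (rule vxor_assoc)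
    finally show "(vxor y \<circ> vxor x) z = (vxor x \<circ> vxor y) z" by simp
  qed
qed

interpretation vx: comp_fun_commute vxor by (rule vxor_cfc)

definition FX :: "nat \<Rightarrow> bool list set \<Rightarrow> bool list" where
  "FX k T = Finite_Set.fold vxor (replicate k False) T"

lemma FX_char: "finite T \<Longrightarrow> T \<subseteq> vecs k \<Longrightarrow> FX k T = map (\<lambda>i. odd (card {t\<in>T. t ! i})) [0..<k]"
proof (induct T rule: finite_induct)
  case empty then show ?case by (simp add: FX_def list_eq_iff_nth_eq)
next
  case (insert x T)
  have lx: "length x = k" using insert by (simp add: vecs_def)
  have "FX k (insert x T) = vxor x (FX k T)" unfolding FX_def using insert by simp
  also have "\<dots> = vxor x (map (\<lambda>i. odd (card {t\<in>T. t ! i})) [0..<k])" using insert by simp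
  also have "\<dots> = map (\<lambda>i. odd (card {t\<in>insert x T. t ! i})) [0..<k]"
  proof (rule nth_equalityI)
    show "length (vxor x (map (\<lambda>i. odd (card {t\<in>T. t ! i})) [0..<k])) = length (map (\<lambda>i. odd (card {t\<in>insert x T. t ! i})) [0..<k])"
      using lx by simp
    fix i assume "i < length (vxor x (map (\<lambda>i. odd (card {t\<in>T. t ! i})) [0..<k]))"
    then have i: "i < k" using lx by simp
    have fin: "finite {t\<in>T. t ! i}" using insert by simp
    have "{t\<in>insert x T. t ! i} = (if x ! i then insert x {t\<in>T. t ! i} else {t\<in>T. t ! i})" by auto
    then have "card {t\<in>insert x T. t ! i} = (if x ! i then Suc (card {t\<in>T. t ! i}) else card {t\<in>T. t ! i})"
      using fin insert(2) by simp
    then show "vxor x (map (\<lambda>i. odd (card {t\<in>T. t ! i})) [0..<k]) ! i = map (\<lambda>i. odd (card {t\<in>insert x T. t ! i})) [0..<k] ! i"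
      using i lx by (simp add: vxor_def)
  qed
  finally show ?case .
qed

lemma FX_vecs: "finite T \<Longrightarrow> T \<subseteq> vecs k \<Longrightarrow> FX k T \<in> vecs k"
  by (simp add: FX_char vecs_def)

lemma odd_card_symdiff: "finite X \<Longrightarrow> finite Y \<Longrightarrow> odd (card ((X - Y) \<union> (Y - X))) = (odd (card X) \<noteq> odd (card Y))"
proof -
  assume f: "finite X" "finite Y"
  have d: "card ((X - Y) \<union> (Y - X)) = card (X - Y) + card (Y - X)"
    using f by (intro card_Un_disjoint) auto
  have c1: "card (X - Y) = card X - card (X \<inter> Y)" using f by (simp add: card_Diff_subset_Int)
  have c2: "card (Y - X) = card Y - card (X \<inter> Y)" using f by (simp add: card_Diff_subset_Int Int_commute)
  have c3: "card (X \<inter> Y) \<le> card X" "card (X \<inter> Y) \<le> card Y" using f by (simp_all add: card_mono)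
  have "card (X - Y) + card (X \<inter> Y) = card X" using c1 c3 by simp
  moreover have "card (Y - X) + card (X \<inter> Y) = card Y" using c2 c3 by simp
  ultimately show ?thesis unfolding d by presburger
qed

lemma FX_symdiff: "finite A \<Longrightarrow> finite B \<Longrightarrow> A \<subseteq> vecs k \<Longrightarrow> B \<subseteq> vecs k \<Longrightarrow>
  FX k ((A - B) \<union> (B - A)) = vxor (FX k A) (FX k B)"
proof -
  assume a: "finite A" "finite B" "A \<subseteq> vecs k" "B \<subseteq> vecs k"
  have fs: "finite ((A - B) \<union> (B - A))" "(A - B) \<union> (B - A) \<subseteq> vecs k" using a by auto
  show ?thesis unfolding FX_char[OF fs] FX_char[OF a(1,3)] FX_char[OF a(2,4)]
  proof (rule nth_equalityI)
    fix i assume "i < length (map (\<lambda>i. odd (card {t \<in> A - B \<union> (B - A). t ! i})) [0..<k])"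
    then have i: "i < k" by simp
    have e: "{t \<in> A - B \<union> (B - A). t ! i} = ({t\<in>A. t!i} - {t\<in>B. t!i}) \<union> ({t\<in>B. t!i} - {t\<in>A. t!i})" by auto
    show "map (\<lambda>i. odd (card {t \<in> A - B \<union> (B - A). t ! i})) [0..<k] ! i =
          vxor (map (\<lambda>i. odd (card {t \<in> A. t ! i})) [0..<k]) (map (\<lambda>i. odd (card {t \<in> B. t ! i})) [0..<k]) ! i"
    proof -
      have "odd (card {t \<in> A - B \<union> (B - A). t ! i}) = (odd (card {t\<in>A. t!i}) \<noteq> odd (card {t\<in>B. t!i}))"
        unfolding e using a(1,2) by (intro odd_card_symdiff) simp_all
      then show ?thesis using i by (simp add: vxor_def)
    qed
  qed simp
qed


lemma FX_empty[simp]: "FX k {} = replicate k False" by (simp add: FX_def)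
lemma FX_insert: "finite T \<Longrightarrow> x \<notin> T \<Longrightarrow> FX k (insert x T) = vxor x (FX k T)"
  by (simp add: FX_def)

lemma span_alt: "f2_span k S = {v. \<exists>T. finite T \<and> T \<subseteq> S \<and> v = FX k T}"
  by (simp add: f2_span_def FX_def)

lemma rank_card:
  assumes C: "finite C" "C \<subseteq> vecs k" "replicate k False \<in> C" "\<And>a b. a \<in> C \<Longrightarrow> b \<in> C \<Longrightarrow> vxor a b \<in> C"
  shows "card C = 2 ^ Min {card S | S. finite S \<and> S \<subseteq> C \<and> f2_span k S = C}"
proof -
  have FX_C: "finite T \<Longrightarrow> T \<subseteq> C \<Longrightarrow> FX k T \<in> C" for T
  proof (induct T rule: finite_induct)
    case empty then show ?case using C(3) by simp
  next
    case (insert x T) then show ?case using C(4) by (simp add: FX_insert)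
  qed
  have span_sub: "S \<subseteq> C \<Longrightarrow> f2_span k S \<subseteq> C" for S
    unfolding span_alt using FX_C by blast
  have span_C: "f2_span k C = C"
  proof
    show "C \<subseteq> f2_span k C"
    proof
      fix c assume c: "c \<in> C"
      have "FX k {c} = c" using c C(2) by (auto simp: FX_insert vecs_def vxor_zero)
      then show "c \<in> f2_span k C" unfolding span_alt using c by (intro CollectI exI[of _ "{c}"]) auto
    qed
  qed (rule span_sub, simp)
  define N where "N = {card S | S. finite S \<and> S \<subseteq> C \<and> f2_span k S = C}"
  have NC: "card C \<in> N" unfolding N_def using span_C C(1) by blast
  have Nfin: "finite N"
  proof -
    have "N \<subseteq> card ` Pow C" unfolding N_def by blast
    then show ?thesis using C(1) finite_subset by blast
  qed
  have "Min N \<in> N" using NC Nfin by (intro Min_in) auto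
  then have "\<exists>S. Min N = card S \<and> finite S \<and> S \<subseteq> C \<and> f2_span k S = C" by (simp add: N_def)
  then obtain S0 where S0: "finite S0" "S0 \<subseteq> C" "f2_span k S0 = C" "card S0 = Min N"
    by metis
  have minimal: "card S0 \<le> card S" if "finite S" "S \<subseteq> C" "f2_span k S = C" for S
  proof -
    have "card S \<in> N" unfolding N_def using that by blast
    then show ?thesis using Nfin S0(4) by simp
  qed
  have S0v: "S0 \<subseteq> vecs k" using S0(2) C(2) by blast
  have inj: "inj_on (FX k) (Pow S0)"
  proof (rule inj_onI, rule ccontr)
    fix T1 T2 assume T: "T1 \<in> Pow S0" "T2 \<in> Pow S0" "FX k T1 = FX k T2" "T1 \<noteq> T2"
    have fT: "finite T1" "finite T2" "T1 \<subseteq> vecs k" "T2 \<subseteq> vecs k"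
      using T(1,2) S0(1) S0v by (auto intro: finite_subset)
    define D where "D = (T1 - T2) \<union> (T2 - T1)"
    have "D \<noteq> {}" using T(4) unfolding D_def by blast
    then obtain d where d: "d \<in> D" by blast
    have Dsub: "D \<subseteq> S0" "finite D" "D \<subseteq> vecs k" using T fT unfolding D_def by auto
    have FD: "FX k D = replicate k False"
      unfolding D_def FX_symdiff[OF fT] T(3) using FX_vecs[OF fT(2,4)]
      by (simp add: vxor_self vecs_def)
    define S' where "S' = S0 - {d}"
    have S'sub: "finite S'" "S' \<subseteq> C" using S0 by (auto simp: S'_def)
    have "f2_span k S' = C"
    proof
      show "f2_span k S' \<subseteq> C" using span_sub S'sub by blast
      show "C \<subseteq> f2_span k S'"
      proof
        fix v assume "v \<in> C"
        then obtain T where T: "finite T" "T \<subseteq> S0" "v = FX k T" using S0(3) unfolding span_alt by blast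
        have Tv: "T \<subseteq> vecs k" using T S0v by blast
        show "v \<in> f2_span k S'"
        proof (cases "d \<in> T")
          case False
          then show ?thesis unfolding span_alt using T by (auto simp: S'_def)
        next
          case True
          define T' where "T' = (T - D) \<union> (D - T)"
          have "FX k T' = vxor (FX k T) (FX k D)" unfolding T'_def using T Tv Dsub by (intro FX_symdiff) auto
          also have "\<dots> = FX k T" using FD FX_vecs[OF T(1) Tv] by (simp add: vxor_zero vecs_def)
          finally have "v = FX k T'" using T by simp
          moreover have "T' \<subseteq> S'" "finite T'" using T Dsub True d by (auto simp: T'_def S'_def)
          ultimately show ?thesis unfolding span_alt by blast
        qed
      qed
    qed
    then have "card S0 \<le> card S'" using minimal S'sub by blast
    moreover have "card S' < card S0" unfolding S'_def using d Dsub S0(1) by (intro card_Diff1_less) auto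
    ultimately show False by simp
  qed
  have "C = FX k ` Pow S0" using S0(1,3) finite_subset unfolding span_alt by (auto simp: Pow_def)
  then have "card C = card (Pow S0)" using inj by (simp add: card_image)
  also have "\<dots> = 2 ^ card S0" using S0(1) by (simp add: card_Pow)
  finally show ?thesis using S0(4) unfolding N_def by simp
qed




definition Mw :: "bool list list \<Rightarrow> bool list \<Rightarrow> bool list" where
  "Mw M y = map (\<lambda>r. dot r y) M"

definition dsum :: "bool list list \<Rightarrow> bool list \<Rightarrow> complex" where
  "dsum M w = sum_list (map (\<lambda>a. chi a w) M)"

lemma hweight_Cons[simp]: "hweight (b # xs) = (if b then 1 else 0) + hweight xs"
  by (simp add: hweight_def)
lemma hweight_Nil[simp]: "hweight [] = 0"
  by (simp add: hweight_def)

lemma dsum_hw: "dsum M w = of_nat (length M) - 2 * of_nat (hweight (Mw M w))"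
  by (induct M) (auto simp: dsum_def Mw_def chi_def)

lemma vxor_map: "vxor (map f M) (map g M) = map (\<lambda>r. f r \<noteq> g r) M"
  by (induct M) simp_all

lemma Mw_vxor: "\<forall>r\<in>set M. length r = l \<Longrightarrow> y \<in> vecs l \<Longrightarrow> y' \<in> vecs l \<Longrightarrow>
   Mw M (vxor y y') = vxor (Mw M y) (Mw M y')"
  unfolding Mw_def vxor_map by (auto simp: vecs_def dot_vxor2)

lemma alpha_eq:
  assumes rows: "\<forall>r\<in>set M. length r = l"
  shows "alpha l M \<phi> = (\<Sum>w\<in>vecs l. exp (\<i> * of_real \<phi> * dsum M w)) / 2^l"
proof -
  define k where "k = length M"
  define C where "C = colspace l M"
  have Ceq: "C = Mw M ` vecs l" by (simp add: C_def colspace_def Mw_def)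
  have Cfin: "finite C" by (simp add: Ceq)
  have Cv: "C \<subseteq> vecs k" by (auto simp: Ceq Mw_def vecs_def k_def)
  have M0: "Mw M (replicate l False) = replicate k False"
    using rows by (simp add: Mw_def k_def map_replicate_const[symmetric] cong: map_cong)
  have C0: "replicate k False \<in> C" using M0 by (auto simp: Ceq intro!: image_eqI[of _ _ "replicate l False"])
  have Cx: "a \<in> C \<Longrightarrow> b \<in> C \<Longrightarrow> vxor a b \<in> C" for a b
    by (auto simp: Ceq Mw_vxor[OF rows, symmetric] intro!: imageI)
  have cardC: "card C = 2 ^ f2_rank l M"
    unfolding f2_rank_def C_def[symmetric] k_def[symmetric] by (rule rank_card[OF Cfin Cv C0 Cx])
  define KM where "KM = {y\<in>vecs l. Mw M y = replicate k False}"
  have fib: "{y\<in>vecs l. Mw M y = Mw M y0} = vxor y0 ` KM" if y0: "y0 \<in> vecs l" for y0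
  proof (intro equalityI subsetI)
    fix y assume "y \<in> {y\<in>vecs l. Mw M y = Mw M y0}"
    then have y: "y \<in> vecs l" "Mw M y = Mw M y0" by auto
    have "Mw M (vxor y0 y) = vxor (Mw M y0) (Mw M y)" using y y0 by (simp add: Mw_vxor[OF rows])
    also have "\<dots> = replicate k False" unfolding y(2) by (simp add: vxor_self Mw_def k_def)
    finally have "vxor y0 y \<in> KM" using y y0 by (simp add: KM_def)
    moreover have "y = vxor y0 (vxor y0 y)" using y y0 by (simp add: vxor_cancel vecs_def)
    ultimately show "y \<in> vxor y0 ` KM" by blast
  next
    fix y assume "y \<in> vxor y0 ` KM"
    then obtain z where z: "z \<in> vecs l" "Mw M z = replicate k False" "y = vxor y0 z" by (auto simp: KM_def)
    have "Mw M (vxor y0 z) = vxor (Mw M y0) (Mw M z)" using z y0 by (simp add: Mw_vxor[OF rows])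
    also have "\<dots> = Mw M y0" using z by (simp add: vxor_zero Mw_def k_def)
    finally show "y \<in> {y\<in>vecs l. Mw M y = Mw M y0}" using z y0 by simp
  qed
  have cardfib: "card {y\<in>vecs l. Mw M y = Mw M y0} = card KM" if y0: "y0 \<in> vecs l" for y0
  proof -
    have "inj_on (vxor y0) KM"
    proof (rule inj_onI)
      fix a b assume ab: "a \<in> KM" "b \<in> KM" "vxor y0 a = vxor y0 b"
      have "length a = length y0" "length b = length y0" using ab(1,2) y0 by (auto simp: KM_def vecs_def)
      then have "a = vxor y0 (vxor y0 a)" "b = vxor y0 (vxor y0 b)" by (simp_all add: vxor_cancel)
      then show "a = b" using ab(3) by simp
    qed
    then show ?thesis unfolding fib[OF y0] by (simp add: card_image)
  qed
  have sumC: "(\<Sum>y\<in>vecs l. g (Mw M y)) = of_nat (card KM) * (\<Sum>c\<in>C. g c)" for g :: "bool list \<Rightarrow> complex"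
  proof -
    have "(\<Sum>y\<in>vecs l. g (Mw M y)) = (\<Sum>c\<in>Mw M ` vecs l. \<Sum>y\<in>{y\<in>vecs l. Mw M y = c}. g (Mw M y))"
      by (rule sum.image_gen) simp
    also have "\<dots> = (\<Sum>c\<in>Mw M ` vecs l. of_nat (card KM) * g c)"
    proof (rule sum.cong)
      fix c assume "c \<in> Mw M ` vecs l"
      then obtain y0 where y0: "y0 \<in> vecs l" "c = Mw M y0" by blast
      have "(\<Sum>y\<in>{y\<in>vecs l. Mw M y = c}. g (Mw M y)) = (\<Sum>y\<in>{y\<in>vecs l. Mw M y = c}. g c)"
        by (rule sum.cong) auto
      also have "\<dots> = of_nat (card KM) * g c" using cardfib[OF y0(1)] y0(2) by simp
      finally show "(\<Sum>y\<in>{y\<in>vecs l. Mw M y = c}. g (Mw M y)) = of_nat (card KM) * g c" .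
    qed simp
    finally show ?thesis by (simp add: Ceq sum_distrib_left)
  qed
  have cKC: "of_nat (card KM) * of_nat (card C) = (2::complex) ^ l"
    using sumC[of "\<lambda>_. 1"] by (simp add: card_vecs)
  have cC0: "(of_nat (card C) :: complex) \<noteq> 0" using C0 Cfin by auto
  define \<zeta> where "\<zeta> = exp (- 2 * \<i> * complex_of_real \<phi>)"
  have ex: "exp (\<i> * of_real \<phi> * dsum M w) = exp (\<i> * complex_of_real (\<phi> * real k)) * \<zeta> ^ hweight (Mw M w)" for w
  proof -
    have e: "\<i> * of_real \<phi> * dsum M w = \<i> * complex_of_real (\<phi> * real k) + of_nat (hweight (Mw M w)) * (- 2 * \<i> * complex_of_real \<phi>)"
      by (simp add: dsum_hw k_def algebra_simps)
    show ?thesis unfolding e exp_add exp_of_nat_mult \<zeta>_def ..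
  qed
  have "(\<Sum>w\<in>vecs l. exp (\<i> * of_real \<phi> * dsum M w)) = of_nat (card KM) * (\<Sum>c\<in>C. exp (\<i> * complex_of_real (\<phi> * real k)) * \<zeta> ^ hweight c)"
    unfolding ex by (rule sumC)
  also have "\<dots> = of_nat (card KM) * exp (\<i> * complex_of_real (\<phi> * real k)) * weight_enum C \<zeta>"
    by (simp add: weight_enum_def sum_distrib_left mult.assoc)
  finally have S1: "(\<Sum>w\<in>vecs l. exp (\<i> * of_real \<phi> * dsum M w)) = of_nat (card KM) * exp (\<i> * complex_of_real (\<phi> * real k)) * weight_enum C \<zeta>" .
  have 1: "(\<Sum>w\<in>vecs l. exp (\<i> * of_real \<phi> * dsum M w)) / 2^l = exp (\<i> * complex_of_real (\<phi> * real k)) * weight_enum C \<zeta> / of_nat (card C)"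
  proof -
    have cK0: "(of_nat (card KM) :: complex) \<noteq> 0"
    proof
      assume "(of_nat (card KM) :: complex) = 0"
      then have "(2::complex) ^ l = 0" using cKC by simp
      then show False by simp
    qed
    show ?thesis unfolding cKC[symmetric] S1 using cK0 cC0 by (simp add: field_simps)
  qed
  have 2: "complex_of_real (2 powr (- real (f2_rank l M))) = 1 / of_nat (card C)"
    by (simp add: cardC powr_minus powr_realpow inverse_eq_divide)
  show ?thesis unfolding 1 alpha_def 2 C_def[symmetric] k_def[symmetric] \<zeta>_def[symmetric] by simp
qed




definition flip :: "nat set \<Rightarrow> bool list \<Rightarrow> bool list" where
  "flip F y = map (\<lambda>i. y ! i \<noteq> (i \<in> F)) [0..<length y]"

lemma flip_vecs[simp]: "y \<in> vecs l \<Longrightarrow> flip F y \<in> vecs l"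
  by (simp add: flip_def vecs_def)

lemma flip_empty: "flip {} y = y"
  by (rule nth_equalityI) (simp_all add: flip_def)

lemma flip_insert: "b < length y \<Longrightarrow> b \<notin> F \<Longrightarrow> flip (insert b F) y = (flip F y)[b := \<not> flip F y ! b]"
  by (rule nth_equalityI) (auto simp: flip_def nth_list_update)

lemma sum_delta_vecs: "w \<in> vecs l \<Longrightarrow> (\<Sum>z\<in>vecs l. f z * (if z = w then 1 else 0)) = (f w :: complex)"
  by (simp add: sum.delta' if_distrib cong: if_cong)

lemma foldr_pauli:
  assumes "distinct bs" "set bs \<subseteq> {..<l}" "y \<in> vecs l"
  shows "x \<in> vecs l \<Longrightarrow> foldr (\<lambda>b A. mat_mult l (if p ! b then pauliX b else ident) A) bs ident x y
     = (if x = flip {b\<in>set bs. p ! b} y then 1 else 0)"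
  using assms
proof (induct bs arbitrary: x)
  case Nil
  have "flip {b\<in>set []. p ! b} y = y" by (simp add: flip_empty)
  then show ?case by (simp add: ident_def)
next
  case (Cons b bs)
  define w where "w = flip {b\<in>set bs. p ! b} y"
  have yv: "y \<in> vecs l" using Cons.prems(4) .
  have wv: "w \<in> vecs l" unfolding w_def using yv by (rule flip_vecs)
  have ly: "length y = l" using yv by (simp add: vecs_def)
  have "foldr (\<lambda>b A. mat_mult l (if p ! b then pauliX b else ident) A) (b # bs) ident x y
     = (\<Sum>z\<in>vecs l. (if p ! b then pauliX b else ident) x z *
          foldr (\<lambda>b A. mat_mult l (if p ! b then pauliX b else ident) A) bs ident z y)"
    by (simp add: mat_mult_def)
  also have "\<dots> = (\<Sum>z\<in>vecs l. (if p ! b then pauliX b else ident) x z * (if z = w then 1 else 0))"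
    using Cons by (intro sum.cong) (simp_all add: w_def)
  also have "\<dots> = (if p ! b then pauliX b else ident) x w" by (rule sum_delta_vecs[OF wv])
  also have "\<dots> = (if x = flip {c\<in>set (b # bs). p ! c} y then 1 else 0)"
  proof (cases "p ! b")
    case True
    have "{c\<in>set (b # bs). p ! c} = insert b {b\<in>set bs. p ! b}" using True by auto
    moreover have "b < length y" "b \<notin> {b\<in>set bs. p ! b}" using Cons ly by auto
    ultimately have "flip {c\<in>set (b # bs). p ! c} y = w[b := \<not> w ! b]" by (simp add: flip_insert w_def)
    then show ?thesis using True by (simp add: pauliX_def)
  next
    case False
    have "{c\<in>set (b # bs). p ! c} = {b\<in>set bs. p ! b}" using False by auto
    then show ?thesis using False by (simp add: ident_def w_def)
  qed
  finally show ?case .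
qed

lemma pauli_string_eq:
  assumes "x \<in> vecs l" "y \<in> vecs l" "length p = l"
  shows "pauli_string l p x y = (if x = vxor y p then 1 else 0)"
proof -
  have "flip {b\<in>set [0..<l]. p ! b} y = vxor y p"
    using assms by (intro nth_equalityI) (auto simp: flip_def vxor_def vecs_def)
  then show ?thesis unfolding pauli_string_def using assms
    by (subst foldr_pauli) auto
qed


lemma vlen: "x \<in> vecs l \<Longrightarrow> length x = l" by (simp add: vecs_def)

lemma ind_fourier:
  assumes x: "x \<in> vecs l" and y: "y \<in> vecs l" and p: "p \<in> vecs l"
  shows "(if x = vxor y p then 1 else 0) = (\<Sum>w\<in>vecs l. chi x w * chi y w * chi p w) / 2^l"
proof -
  define u where "u = vxor x (vxor y p)"
  have uv: "u \<in> vecs l" using x y p by (simp add: u_def)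
  have "(\<Sum>w\<in>vecs l. chi x w * chi y w * chi p w) = (\<Sum>w\<in>vecs l. chi u w)"
  proof (rule sum.cong)
    fix w assume w: "w \<in> vecs l"
    have "chi u w = chi x w * chi (vxor y p) w" unfolding u_def using x y p w
      by (intro chi_vxor1) (simp_all add: vlen)
    also have "chi (vxor y p) w = chi y w * chi p w" using y p w by (intro chi_vxor1) (simp_all add: vlen)
    finally show "chi x w * chi y w * chi p w = chi u w" by (simp add: mult.assoc)
  qed simp
  also have "\<dots> = (if u = replicate l False then 2^l else 0)" by (rule sum_chi[OF uv])
  also have "(u = replicate l False) = (x = vxor y p)"
    unfolding u_def using vxor_eq_zero[of x "vxor y p"] x y p by (simp add: vlen)
  finally show ?thesis by simp
qed

lemma sum_list_map_nth: "sum_list (map f P) = (\<Sum>a<length P. f (P ! a))"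
  by (simp add: sum_list_sum_nth atLeast0LessThan)

lemma ham_fourier:
  assumes rows: "\<forall>r\<in>set P. length r = l" and x: "x \<in> vecs l" and y: "y \<in> vecs l"
  shows "hamiltonian l P x y = (\<Sum>w\<in>vecs l. chi x w * chi y w * dsum P w) / 2^l"
proof -
  have "hamiltonian l P x y = (\<Sum>a<length P. (\<Sum>w\<in>vecs l. chi x w * chi y w * chi (P ! a) w) / 2^l)"
    unfolding hamiltonian_def
  proof (rule sum.cong)
    fix a assume "a \<in> {..<length P}"
    then have pa: "P ! a \<in> vecs l" using rows by (simp add: vecs_def)
    show "pauli_string l (P ! a) x y = (\<Sum>w\<in>vecs l. chi x w * chi y w * chi (P ! a) w) / 2^l"
      using pa x y by (simp add: pauli_string_eq vlen ind_fourier)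
  qed simp
  also have "\<dots> = (\<Sum>w\<in>vecs l. chi x w * chi y w * dsum P w) / 2^l"
    by (simp add: sum_divide_distrib[symmetric] dsum_def sum_list_map_nth sum_distrib_left sum.swap[of _ "{..<length P}"])
  finally show ?thesis .
qed

lemma chi_chi_sum:
  assumes "w \<in> vecs l" "v \<in> vecs l"
  shows "(\<Sum>y\<in>vecs l. chi y w * chi y v) = (if w = v then 2^l else 0)"
proof -
  have "(\<Sum>y\<in>vecs l. chi y w * chi y v) = (\<Sum>y\<in>vecs l. chi (vxor w v) y)"
  proof (rule sum.cong)
    fix y assume "y \<in> vecs l"
    then show "chi y w * chi y v = chi (vxor w v) y" using assms
      by (simp add: chi_vxor1 chi_sym[of y] vlen)
  qed simp
  also have "\<dots> = (if vxor w v = replicate l False then 2^l else 0)" using assms by (intro sum_chi) simp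
  also have "(vxor w v = replicate l False) = (w = v)" using vxor_eq_zero[of w v] assms by (simp add: vlen)
  finally show ?thesis .
qed

lemma conv:
  "(\<Sum>y\<in>vecs l. (\<Sum>w\<in>vecs l. f w * chi y w) * (\<Sum>v\<in>vecs l. g v * chi y v)) = 2^l * (\<Sum>w\<in>vecs l. f w * g w)"
proof -
  have "(\<Sum>y\<in>vecs l. (\<Sum>w\<in>vecs l. f w * chi y w) * (\<Sum>v\<in>vecs l. g v * chi y v))
      = (\<Sum>y\<in>vecs l. \<Sum>w\<in>vecs l. \<Sum>v\<in>vecs l. (f w * g v) * (chi y w * chi y v))"
    by (rule sum.cong) (simp_all add: sum_product mult_ac)
  also have "\<dots> = (\<Sum>w\<in>vecs l. \<Sum>y\<in>vecs l. \<Sum>v\<in>vecs l. (f w * g v) * (chi y w * chi y v))"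
    by (rule sum.swap)
  also have "\<dots> = (\<Sum>w\<in>vecs l. \<Sum>v\<in>vecs l. \<Sum>y\<in>vecs l. (f w * g v) * (chi y w * chi y v))"
    by (rule sum.cong) (simp, rule sum.swap)
  also have "\<dots> = (\<Sum>w\<in>vecs l. \<Sum>v\<in>vecs l. (f w * g v) * (if w = v then 2^l else 0))"
  proof (rule sum.cong, simp, rule sum.cong, simp)
    fix w v assume "w \<in> vecs l" "v \<in> vecs l"
    then show "(\<Sum>y\<in>vecs l. (f w * g v) * (chi y w * chi y v)) = (f w * g v) * (if w = v then 2^l else 0)"
      by (simp only: sum_distrib_left[symmetric] chi_chi_sum)
  qed
  also have "\<dots> = (\<Sum>w\<in>vecs l. f w * g w * 2^l)"
  proof (rule sum.cong, simp)
    fix w assume w: "w \<in> vecs l"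
    have "(\<Sum>v\<in>vecs l. (f w * g v) * (if w = v then 2^l else 0)) = (\<Sum>v\<in>vecs l. if w = v then f w * g v * 2^l else 0)"
      by (rule sum.cong) simp_all
    also have "\<dots> = f w * g w * 2^l" using w by (simp add: sum.delta)
    finally show "(\<Sum>v\<in>vecs l. (f w * g v) * (if w = v then 2^l else 0)) = f w * g w * 2^l" .
  qed
  finally show ?thesis by (simp add: sum_distrib_left mult_ac)
qed


lemma chi_chi_sum2:
  assumes "x \<in> vecs l" "z \<in> vecs l"
  shows "(\<Sum>w\<in>vecs l. chi x w * chi z w) = (if x = z then 2^l else 0)"
proof -
  have "(\<Sum>w\<in>vecs l. chi x w * chi z w) = (\<Sum>w\<in>vecs l. chi w x * chi w z)"
    by (rule sum.cong) (use assms in \<open>simp_all add: chi_sym[of x] chi_sym[of z] vlen\<close>)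
  also have "\<dots> = (if x = z then 2^l else 0)" using assms by (rule chi_chi_sum)
  finally show ?thesis .
qed

definition lam :: "real \<Rightarrow> bool list list \<Rightarrow> bool list \<Rightarrow> complex" where
  "lam \<theta> P w = \<i> * complex_of_real \<theta> * dsum P w"

lemma mat_pow_eq:
  assumes rows: "\<forall>r\<in>set P. length r = l" and z: "z \<in> vecs l"
  shows "x \<in> vecs l \<Longrightarrow> mat_pow l (\<lambda>u v. \<i> * complex_of_real \<theta> * hamiltonian l P u v) k x z
     = (\<Sum>w\<in>vecs l. chi x w * chi z w * lam \<theta> P w ^ k) / 2^l"
proof (induct k arbitrary: x)
  case 0
  then show ?case using z by (simp add: ident_def chi_chi_sum2)
next
  case (Suc k)
  let ?A = "\<lambda>u v. \<i> * complex_of_real \<theta> * hamiltonian l P u v"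
  have "mat_pow l ?A (Suc k) x z = (\<Sum>y\<in>vecs l. ?A x y * mat_pow l ?A k y z)"
    by (simp add: mat_mult_def)
  also have "\<dots> = (\<Sum>y\<in>vecs l. (\<Sum>w\<in>vecs l. (chi x w * lam \<theta> P w / 2^l) * chi y w) *
                      (\<Sum>v\<in>vecs l. (chi z v * lam \<theta> P v ^ k / 2^l) * chi y v))"
  proof (rule sum.cong, simp)
    fix y assume y: "y \<in> vecs l"
    have 1: "?A x y = (\<Sum>w\<in>vecs l. (chi x w * lam \<theta> P w / 2^l) * chi y w)"
      using Suc.prems y rows
      by (simp add: ham_fourier lam_def sum_divide_distrib sum_distrib_left mult_ac)
    have 2: "mat_pow l ?A k y z = (\<Sum>v\<in>vecs l. (chi z v * lam \<theta> P v ^ k / 2^l) * chi y v)"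
      using Suc.hyps[OF y] by (simp add: sum_divide_distrib mult_ac)
    show "?A x y * mat_pow l ?A k y z = (\<Sum>w\<in>vecs l. (chi x w * lam \<theta> P w / 2^l) * chi y w) *
                      (\<Sum>v\<in>vecs l. (chi z v * lam \<theta> P v ^ k / 2^l) * chi y v)"
      unfolding 1 2 ..
  qed
  also have "\<dots> = 2^l * (\<Sum>w\<in>vecs l. (chi x w * lam \<theta> P w / 2^l) * (chi z w * lam \<theta> P w ^ k / 2^l))"
    by (rule conv)
  also have "\<dots> = (\<Sum>w\<in>vecs l. chi x w * chi z w * lam \<theta> P w ^ Suc k) / 2^l"
    by (simp add: sum_distrib_left sum_divide_distrib mult_ac power2_eq_square)
  finally show ?case .
qed


lemma exp_sums: "(\<lambda>n. (x::complex) ^ n / of_nat (fact n)) sums exp x"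
proof -
  have "(\<lambda>n. x ^ n /\<^sub>R fact n) = (\<lambda>n. x ^ n / of_nat (fact n))"
    by (rule ext) (simp add: scaleR_conv_of_real field_simps)
  then show ?thesis using exp_converges[of x] by simp
qed

lemma chi_zero2[simp]: "chi (replicate l False) w = 1"
  by (simp add: chi_def)

lemma amp_eq:
  assumes rows: "\<forall>r\<in>set P. length r = l" and x: "x \<in> vecs l"
  shows "mat_exp l (\<lambda>u v. \<i> * complex_of_real \<theta> * hamiltonian l P u v) x (replicate l False)
     = (\<Sum>w\<in>vecs l. chi x w * exp (lam \<theta> P w)) / 2^l"
proof -
  let ?A = "\<lambda>u v. \<i> * complex_of_real \<theta> * hamiltonian l P u v"
  have "(\<lambda>k. mat_pow l ?A k x (replicate l False) / of_nat (fact k))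
      = (\<lambda>k. \<Sum>w\<in>vecs l. (chi x w / 2^l) * (lam \<theta> P w ^ k / of_nat (fact k)))"
    by (rule ext) (simp add: mat_pow_eq[OF rows zero_vecs x] sum_divide_distrib)
  moreover have "(\<lambda>k. \<Sum>w\<in>vecs l. (chi x w / 2^l) * (lam \<theta> P w ^ k / of_nat (fact k)))
      sums (\<Sum>w\<in>vecs l. (chi x w / 2^l) * exp (lam \<theta> P w))"
    by (intro sums_sum sums_mult exp_sums)
  ultimately have "(\<lambda>k. mat_pow l ?A k x (replicate l False) / of_nat (fact k)) sums (\<Sum>w\<in>vecs l. (chi x w / 2^l) * exp (lam \<theta> P w))"
    by simp
  then show ?thesis unfolding mat_exp_def
    by (simp add: sums_unique[symmetric] sum_divide_distrib)
qed




lemma cnj_chi[simp]: "cnj (chi a w) = chi a w" by (simp add: chi_def)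

lemma cnj_dsum[simp]: "cnj (dsum P w) = dsum P w"
  by (induct P) (simp_all add: dsum_def)

lemma cnj_lam: "cnj (lam \<theta> P w) = - lam \<theta> P w"
  by (simp add: lam_def)

lemma dsum_diff:
  assumes rows: "\<forall>r\<in>set P. length r = l" and w: "w \<in> vecs l" and s: "s \<in> vecs l"
  shows "dsum P w - dsum P (vxor w s) = 2 * dsum (restrict_rows P s) w"
  using rows
proof (induct P)
  case Nil then show ?case by (simp add: dsum_def restrict_rows_def)
next
  case (Cons a P)
  have la: "length a = l" using Cons.prems by simp
  have c: "chi a (vxor w s) = chi a w * chi a s" using la w s by (intro chi_vxor2) (simp_all add: vlen)
  have ih: "dsum P w - dsum P (vxor w s) = 2 * dsum (restrict_rows P s) w" using Cons by simp
  show ?case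
  proof (cases "dot a s")
    case True
    then have "chi a s = -1" by (simp add: chi_def)
    then show ?thesis using ih c True by (simp add: dsum_def restrict_rows_def algebra_simps)
  next
    case False
    then have "chi a s = 1" by (simp add: chi_def)
    then show ?thesis using ih c False by (simp add: dsum_def restrict_rows_def algebra_simps)
  qed
qed

lemma sum_reindex_vxor:
  assumes w: "w \<in> vecs l"
  shows "(\<Sum>v\<in>vecs l. h v) = (\<Sum>s\<in>vecs l. h (vxor w s))"
proof (rule sum.reindex_bij_witness[of _ "vxor w" "vxor w"])
  fix a assume "a \<in> vecs l"
  then show "vxor w (vxor w a) = a" "vxor w a \<in> vecs l" using w by (simp_all add: vxor_cancel vlen)
next
  fix a assume "a \<in> vecs l"
  then show "vxor w (vxor w a) = a" "vxor w a \<in> vecs l" using w by (simp_all add: vxor_cancel vlen)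
next
  fix a assume "a \<in> vecs l"
  then show "h (vxor w (vxor w a)) = h a" using w by (simp add: vxor_cancel vlen)
qed


lemma exp_cnj': "cnj (exp z) = exp (cnj z)"
  by (simp add: cis_cnj exp_eq_polar)

lemma prob_eq:
  assumes rows: "\<forall>r\<in>set P. length r = l" and y: "y \<in> vecs l"
  shows "complex_of_real (xprog_prob l P \<theta> y) =
    (\<Sum>w\<in>vecs l. \<Sum>v\<in>vecs l. (chi y w * chi y v) * (exp (lam \<theta> P w) * exp (- lam \<theta> P v))) / (2^l * 2^l)"
proof -
  define psi where "psi = (\<Sum>w\<in>vecs l. chi y w * exp (lam \<theta> P w)) / 2^l"
  have a: "mat_exp l (\<lambda>u v. \<i> * complex_of_real \<theta> * hamiltonian l P u v) y (replicate l False) = psi"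
    unfolding psi_def by (rule amp_eq[OF rows y])
  have c: "cnj psi = (\<Sum>v\<in>vecs l. chi y v * exp (- lam \<theta> P v)) / 2^l"
    by (simp add: psi_def exp_cnj' cnj_lam)
  have "complex_of_real (xprog_prob l P \<theta> y) = psi * cnj psi"
    unfolding xprog_prob_def a by (rule complex_norm_square)
  also have "\<dots> = (\<Sum>w\<in>vecs l. \<Sum>v\<in>vecs l. (chi y w * chi y v) * (exp (lam \<theta> P w) * exp (- lam \<theta> P v))) / (2^l * 2^l)"
    by (simp only: c) (simp add: psi_def sum_product mult_ac exp_cnj' cnj_lam)
  finally show ?thesis .
qed

theorem proposition5:
  fixes n l :: nat and P :: "bool list list" and \<theta> :: real
    and m :: "bool list \<Rightarrow> bool list" and x :: "bool list"
  assumes "length P = n" and "\<forall>row\<in>set P. length row = l"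
    and "is_projector l m"
    and "x \<in> m ` vecs l"
  shows "complex_of_real (marginal_prob l P \<theta> m x) =
    (\<Sum>s\<in>dual_map l m ` vecs l. (if dot x s then -1 else 1) * alpha l (restrict_rows P s) (2 * \<theta>))
      / of_nat (card (dual_map l m ` vecs l))"
proof -
  interpret proj l m using assms(3) by unfold_locales
  have rows: "\<forall>r\<in>set P. length r = l" using assms(2) .
  have xv: "x \<in> vecs l" using assms(4) by auto
  define Fib where "Fib = {y\<in>vecs l. m y = x}"
  define E where "E = (\<lambda>w v. exp (lam \<theta> P w) * exp (- lam \<theta> P v))"
  define K where "K = (of_nat (card Ker) :: complex)"
  define Q where "Q = (\<lambda>s. \<Sum>w\<in>vecs l. exp (\<i> * complex_of_real (2 * \<theta>) * dsum (restrict_rows P s) w))"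
  have Fibv: "Fib \<subseteq> vecs l" by (auto simp: Fib_def)
  have "complex_of_real (marginal_prob l P \<theta> m x) = (\<Sum>y\<in>Fib. complex_of_real (xprog_prob l P \<theta> y))"
    by (simp add: marginal_prob_def Fib_def)
  also have "\<dots> = (\<Sum>y\<in>Fib. (\<Sum>w\<in>vecs l. \<Sum>v\<in>vecs l. (chi y w * chi y v) * E w v) / (2^l * 2^l))"
    by (rule sum.cong) (use Fibv in \<open>auto simp: prob_eq[OF rows] E_def\<close>)
  also have "\<dots> = (\<Sum>w\<in>vecs l. \<Sum>v\<in>vecs l. E w v * (\<Sum>y\<in>Fib. chi y w * chi y v)) / (2^l * 2^l)"
  proof -
    have "(\<Sum>y\<in>Fib. \<Sum>w\<in>vecs l. \<Sum>v\<in>vecs l. (chi y w * chi y v) * E w v)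
        = (\<Sum>w\<in>vecs l. \<Sum>y\<in>Fib. \<Sum>v\<in>vecs l. (chi y w * chi y v) * E w v)" by (rule sum.swap)
    also have "\<dots> = (\<Sum>w\<in>vecs l. \<Sum>v\<in>vecs l. \<Sum>y\<in>Fib. (chi y w * chi y v) * E w v)"
      by (rule sum.cong) (simp, rule sum.swap)
    also have "\<dots> = (\<Sum>w\<in>vecs l. \<Sum>v\<in>vecs l. E w v * (\<Sum>y\<in>Fib. chi y w * chi y v))"
      by (simp add: sum_distrib_left mult_ac)
    finally show ?thesis by (simp add: sum_divide_distrib[symmetric])
  qed
  also have "\<dots> = (\<Sum>w\<in>vecs l. \<Sum>v\<in>vecs l. E w v * (chi x (vxor w v) * (if vxor w v \<in> Sd then K else 0))) / (2^l * 2^l)"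
  proof -
    have "(\<Sum>y\<in>Fib. chi y w * chi y v) = chi x (vxor w v) * (if vxor w v \<in> Sd then K else 0)"
      if w: "w \<in> vecs l" and v: "v \<in> vecs l" for w v
    proof -
      have "(\<Sum>y\<in>Fib. chi y w * chi y v) = (\<Sum>y\<in>Fib. chi y (vxor w v))"
      proof (rule sum.cong)
        fix y assume "y \<in> Fib"
        then have "y \<in> vecs l" using Fibv by blast
        then show "chi y w * chi y v = chi y (vxor w v)" using w v by (simp add: chi_vxor2 vlen)
      qed simp
      also have "\<dots> = chi x (vxor w v) * (if vxor w v \<in> Sd then K else 0)"
        unfolding Fib_def K_def using w v by (intro fiber_sum assms(4)) simp
      finally show ?thesis .
    qed
    then have fb: "\<And>w v. w \<in> vecs l \<Longrightarrow> v \<in> vecs l \<Longrightarrow> (\<Sum>y\<in>Fib. chi y w * chi y v) = chi x (vxor w v) * (if vxor w v \<in> Sd then K else 0)" .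
    have "(\<Sum>w\<in>vecs l. \<Sum>v\<in>vecs l. E w v * (\<Sum>y\<in>Fib. chi y w * chi y v)) =
          (\<Sum>w\<in>vecs l. \<Sum>v\<in>vecs l. E w v * (chi x (vxor w v) * (if vxor w v \<in> Sd then K else 0)))"
      by (rule sum.cong[OF refl], rule sum.cong[OF refl]) (simp add: fb)
    then show ?thesis by simp
  qed
  also have "\<dots> = (\<Sum>w\<in>vecs l. \<Sum>s\<in>vecs l. E w (vxor w s) * (chi x s * (if s \<in> Sd then K else 0))) / (2^l * 2^l)"
  proof -
    have "(\<Sum>v\<in>vecs l. E w v * (chi x (vxor w v) * (if vxor w v \<in> Sd then K else 0)))
        = (\<Sum>s\<in>vecs l. E w (vxor w s) * (chi x s * (if s \<in> Sd then K else 0)))" if w: "w \<in> vecs l" for w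
    proof -
      have "(\<Sum>v\<in>vecs l. E w v * (chi x (vxor w v) * (if vxor w v \<in> Sd then K else 0)))
          = (\<Sum>s\<in>vecs l. E w (vxor w s) * (chi x (vxor w (vxor w s)) * (if vxor w (vxor w s) \<in> Sd then K else 0)))"
        by (rule sum_reindex_vxor[OF w])
      also have "\<dots> = (\<Sum>s\<in>vecs l. E w (vxor w s) * (chi x s * (if s \<in> Sd then K else 0)))"
        by (rule sum.cong) (use w in \<open>simp_all add: vxor_cancel vlen\<close>)
      finally show ?thesis .
    qed
    then show ?thesis by (simp cong: sum.cong_simp)
  qed
  also have "\<dots> = (\<Sum>w\<in>vecs l. \<Sum>s\<in>Sd. K * chi x s * exp (\<i> * complex_of_real (2 * \<theta>) * dsum (restrict_rows P s) w)) / (2^l * 2^l)"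
  proof -
    have "(\<Sum>s\<in>vecs l. E w (vxor w s) * (chi x s * (if s \<in> Sd then K else 0)))
        = (\<Sum>s\<in>Sd. K * chi x s * exp (\<i> * complex_of_real (2 * \<theta>) * dsum (restrict_rows P s) w))"
      if w: "w \<in> vecs l" for w
    proof -
      have "(\<Sum>s\<in>vecs l. E w (vxor w s) * (chi x s * (if s \<in> Sd then K else 0)))
          = (\<Sum>s\<in>vecs l. if s \<in> Sd then K * chi x s * E w (vxor w s) else 0)"
        by (rule sum.cong) simp_all
      also have "\<dots> = (\<Sum>s\<in>Sd. K * chi x s * E w (vxor w s))"
        using Sd_sub by (simp add: sum.If_cases Int_absorb1 Int_commute)
      also have "\<dots> = (\<Sum>s\<in>Sd. K * chi x s * exp (\<i> * complex_of_real (2 * \<theta>) * dsum (restrict_rows P s) w))"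
      proof (rule sum.cong)
        fix s assume "s \<in> Sd"
        then have s: "s \<in> vecs l" using Sd_sub by blast
        have "E w (vxor w s) = exp (lam \<theta> P w + - lam \<theta> P (vxor w s))" unfolding E_def exp_add ..
        also have "lam \<theta> P w + - lam \<theta> P (vxor w s) = \<i> * complex_of_real \<theta> * (dsum P w - dsum P (vxor w s))"
          by (simp add: lam_def algebra_simps)
        also have "\<dots> = \<i> * complex_of_real (2 * \<theta>) * dsum (restrict_rows P s) w"
          by (simp add: dsum_diff[OF rows w s])
        finally show "K * chi x s * E w (vxor w s) = K * chi x s * exp (\<i> * complex_of_real (2 * \<theta>) * dsum (restrict_rows P s) w)"
          by simp
      qed simp
      finally show ?thesis .
    qed
    then show ?thesis by (simp cong: sum.cong_simp)
  qed
  also have "\<dots> = K * (\<Sum>s\<in>Sd. chi x s * Q s) / (2^l * 2^l)"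
    by (simp add: Q_def sum.swap[of _ "vecs l" Sd] sum_distrib_left mult_ac)
  finally have L: "complex_of_real (marginal_prob l P \<theta> m x) = K * (\<Sum>s\<in>Sd. chi x s * Q s) / (2^l * 2^l)" .
  have R: "(\<Sum>s\<in>dual_map l m ` vecs l. (if dot x s then -1 else 1) * alpha l (restrict_rows P s) (2 * \<theta>))
      = (\<Sum>s\<in>Sd. chi x s * Q s) / 2^l"
  proof -
    have "(\<Sum>s\<in>Sd. (if dot x s then -1 else 1) * alpha l (restrict_rows P s) (2 * \<theta>)) = (\<Sum>s\<in>Sd. chi x s * Q s / 2^l)"
    proof (rule sum.cong)
      fix s assume "s \<in> Sd"
      have rs: "\<forall>r\<in>set (restrict_rows P s). length r = l" using rows by (simp add: restrict_rows_def)
      show "(if dot x s then -1 else 1) * alpha l (restrict_rows P s) (2 * \<theta>) = chi x s * Q s / 2^l"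
        by (simp add: alpha_eq[OF rs] Q_def chi_def)
    qed simp
    then show ?thesis by (simp add: Sd_def sum_divide_distrib)
  qed
  have KS: "K * of_nat (card Sd) = 2 ^ l" unfolding K_def by (rule card_KS)
  have S0: "(of_nat (card Sd) :: complex) \<noteq> 0"
  proof
    assume "(of_nat (card Sd) :: complex) = 0"
    then have "(2::complex) ^ l = 0" using KS by simp
    then show False by simp
  qed
  have K0: "K \<noteq> 0"
  proof
    assume "K = 0"
    then have "(2::complex) ^ l = 0" using KS by simp
    then show False by simp
  qed
  have R': "(\<Sum>s\<in>Sd. (if dot x s then -1 else 1) * alpha l (restrict_rows P s) (2 * \<theta>))
      = (\<Sum>s\<in>Sd. chi x s * Q s) / 2^l" using R by (simp only: Sd_def)
  have "K * (\<Sum>s\<in>Sd. chi x s * Q s) / (2^l * 2^l) = (\<Sum>s\<in>Sd. chi x s * Q s) / 2^l / of_nat (card Sd)"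
    unfolding KS[symmetric] using S0 K0 by (simp add: field_simps)
  then show ?thesis unfolding L Sd_def[symmetric] R' .
qed


end
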